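(* Let $2\le M_R\le M_T$, $\sigma^2>0$, let $\tilde{\mathbf\Phi}\in\mathbb R^{M_R\times M_T}$ have i.i.d. $\mathcal N(0,\sigma^2)$ entries, and let $\mathbf\Sigma\in\mathbb R^{M_R\times M_T}$ have $[\mathbf\Sigma]_{1,1}=\sqrt{M_TM_R}$ and all other entries zero. Write $\mathbf S=-j\mathbf\Sigma+\tilde{\mathbf\Phi}=[\mathbf s_1\ \cdots\ \mathbf s_{M_R}]^T$. Define $\mathbf s_1^\perp=\mathbf s_1$ and, for $i=2,\dots,M_R$, $\mathbf A_i=\mathbf I_{M_T}-\sum_{n=1}^{i-1}\frac{\mathbf s_n^\perp\mathbf s_n^{\perp H}}{\|\mathbf s_n^\perp\|^2}$ and $\mathbf s_i^\perp=\mathbf A_i\mathbf s_i$ (Gram–Schmidt). Then, with probability 1, for each $i=2,\dots,M_R$ the real symmetric matrix $\mathrm{Re}(\mathbf A_i)$ has eigenvalues $$\{\underbrace{1,\dots,1}_{M_T-i},\ \underbrace{0,\dots,0}_{i-2},\ \eta^{(i)},\ 1-\eta^{(i)}\}$$ for some $\eta^{(i)}=\eta^{(i)}(\mathbf s_1^\perp,\dots,\mathbf s_{i-1}^\perp)\in[0,1]$.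
   Context: $\mathbf s_i^T$ denotes the $i$th row of $\mathbf S$; $\mathrm{Re}$ is the entrywise real part. *)

theory Defs
  imports "HOL-Probability.Probability" "Jordan_Normal_Form.Char_Poly"
begin

definition cvnorm2 :: "complex vec \<Rightarrow> real" where
  "cvnorm2 v = (\<Sum>k<dim_vec v. (cmod (v $ k))\<^sup>2)"

definition outer_H :: "complex vec \<Rightarrow> complex mat" where
  "outer_H v = mat (dim_vec v) (dim_vec v) (\<lambda>(r, c). v $ r * cnj (v $ c))"

definition gs_proj :: "nat \<Rightarrow> complex vec list \<Rightarrow> complex mat" where
  "gs_proj n vs = 1\<^sub>m n - foldr (\<lambda>v B. (complex_of_real (1 / cvnorm2 v)) \<cdot>\<^sub>m outer_H v + B) vs (0\<^sub>m n n)"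

text \<open>gs_perps S k = [s_1^perp, ..., s_k^perp] (Gram-Schmidt on the rows of S, rows 0-indexed).\<close>
fun gs_perps :: "complex mat \<Rightarrow> nat \<Rightarrow> complex vec list" where
  "gs_perps S 0 = []"
| "gs_perps S (Suc k) = gs_perps S k @ [gs_proj (dim_col S) (gs_perps S k) *\<^sub>v row S k]"

text \<open>Paper's A_i (1-based i): projector built from s_1^perp, ..., s_(i-1)^perp.\<close>
definition gs_A :: "complex mat \<Rightarrow> nat \<Rightarrow> complex mat" where
  "gs_A S i = gs_proj (dim_col S) (gs_perps S (i - 1))"

definition Re_mat :: "complex mat \<Rightarrow> real mat" where
  "Re_mat A = map_mat Re A"

definition S_mat :: "nat \<Rightarrow> nat \<Rightarrow> (nat \<times> nat \<Rightarrow> real) \<Rightarrow> complex mat" where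
  "S_mat MR MT Phi = mat MR MT (\<lambda>(r, c).
     (if r = 0 \<and> c = 0 then - \<i> * complex_of_real (sqrt (real MT * real MR)) else 0)
     + complex_of_real (Phi (r, c)))"

definition has_eigenvalues :: "real mat \<Rightarrow> real multiset \<Rightarrow> bool" where
  "has_eigenvalues A E \<longleftrightarrow> char_poly A = prod_mset (image_mset (\<lambda>x. [:- x, 1:]) E)"

end

theory Submission
  imports Defs "Jordan_Normal_Form.Schur_Decomposition"
begin


definition ip :: "nat \<Rightarrow> (nat \<Rightarrow> complex) \<Rightarrow> (nat \<Rightarrow> complex) \<Rightarrow> complex" where
  "ip n x y = (\<Sum>r<n. cnj (x r) * y r)"

definition gG :: "complex mat \<Rightarrow> nat \<Rightarrow> nat \<Rightarrow> complex" where
  "gG S j r = (gs_perps S (Suc j) ! j) $ r"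

definition Nc :: "complex mat \<Rightarrow> nat \<Rightarrow> complex" where
  "Nc S j = ip (dim_col S) (gG S j) (gG S j)"

lemma gs_perps_length[simp]: "length (gs_perps S k) = k"
  by (induction k) auto

lemma gs_perps_nth: "j < k \<Longrightarrow> gs_perps S k ! j = gs_perps S (Suc j) ! j"
proof (induction k)
  case 0 then show ?case by simp
next
  case (Suc k)
  show ?case
  proof (cases "j < k")
    case True
    then show ?thesis using Suc by (simp add: nth_append)
  next
    case False
    then have "j = k" using Suc by simp
    then show ?thesis by simp
  qed
qed

definition gsF :: "complex vec \<Rightarrow> complex mat \<Rightarrow> complex mat" where
  "gsF v B = (complex_of_real (1 / cvnorm2 v)) \<cdot>\<^sub>m outer_H v + B"

lemma gs_proj_gsF: "gs_proj n vs = 1\<^sub>m n - foldr gsF vs (0\<^sub>m n n)"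
  unfolding gs_proj_def gsF_def[abs_def] by simp

lemma foldr_dims: "dim_row (foldr gsF vs (0\<^sub>m n n)) = n \<and> dim_col (foldr gsF vs (0\<^sub>m n n)) = n"
  by (induction vs) (auto simp: gsF_def)

lemma gs_proj_dims[simp]: "dim_row (gs_proj n vs) = n" "dim_col (gs_proj n vs) = n"
  unfolding gs_proj_gsF using foldr_dims by auto

lemma gs_perps_dim: "j < k \<Longrightarrow> dim_vec (gs_perps S k ! j) = dim_col S"
  by (subst gs_perps_nth, simp, cases "Suc j", simp_all add: nth_append)

lemma cvnorm2_c: "complex_of_real (cvnorm2 v) = (\<Sum>r<dim_vec v. cnj (v $ r) * v $ r)"
  unfolding cvnorm2_def of_real_sum
  by (rule sum.cong, simp, subst complex_norm_square, simp add: mult.commute)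

lemma foldr_entry:
  assumes "\<forall>v\<in>set vs. dim_vec v = n" "r < n" "c < n"
  shows "foldr gsF vs (0\<^sub>m n n) $$ (r,c)
     = (\<Sum>j<length vs. (vs!j) $ r * cnj ((vs!j) $ c) / ip n (\<lambda>t. (vs!j) $ t) (\<lambda>t. (vs!j) $ t))"
  using assms
proof (induction vs)
  case Nil then show ?case by simp
next
  case (Cons v vs)
  have dv: "dim_vec v = n" using Cons by simp
  have IH: "foldr gsF vs (0\<^sub>m n n) $$ (r,c)
     = (\<Sum>j<length vs. (vs!j) $ r * cnj ((vs!j) $ c) / ip n (\<lambda>t. (vs!j) $ t) (\<lambda>t. (vs!j) $ t))"
    using Cons by auto
  have e: "complex_of_real (1 / cvnorm2 v) * (v $ r * cnj (v $ c)) = v $ r * cnj (v $ c) / ip n (\<lambda>t. v $ t) (\<lambda>t. v $ t)"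
    using cvnorm2_c[of v] dv by (simp add: ip_def divide_inverse of_real_inverse mult.commute)
  have "foldr gsF (v # vs) (0\<^sub>m n n) $$ (r,c) = complex_of_real (1 / cvnorm2 v) * (v $ r * cnj (v $ c)) + foldr gsF vs (0\<^sub>m n n) $$ (r,c)"
    using foldr_dims[of vs n] Cons(3,4) dv by (simp add: gsF_def outer_H_def)
  also have "\<dots> = (\<Sum>j<length (v#vs). ((v#vs)!j) $ r * cnj (((v#vs)!j) $ c) / ip n (\<lambda>t. ((v#vs)!j) $ t) (\<lambda>t. ((v#vs)!j) $ t))"
    unfolding IH e length_Cons sum.lessThan_Suc_shift by simp
  finally show ?case .
qed

lemma gs_proj_entry:
  assumes "\<forall>v\<in>set vs. dim_vec v = n" "r < n" "c < n"
  shows "gs_proj n vs $$ (r,c) = (if r = c then 1 else 0)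
     - (\<Sum>j<length vs. (vs!j) $ r * cnj ((vs!j) $ c) / ip n (\<lambda>t. (vs!j) $ t) (\<lambda>t. (vs!j) $ t))"
  unfolding gs_proj_gsF
  apply (subst index_minus_mat(1))
  using foldr_dims[of vs n] assms apply auto[2]
  apply (subst foldr_entry[OF assms])
  apply (simp add: assms)
  done

definition Aent :: "complex mat \<Rightarrow> nat \<Rightarrow> nat \<Rightarrow> nat \<Rightarrow> complex" where
  "Aent S k r c = (if r = c then 1 else 0) - (\<Sum>j<k. gG S j r * cnj (gG S j c) / Nc S j)"

lemma gs_proj_perps_entry:
  assumes "r < dim_col S" "c < dim_col S"
  shows "gs_proj (dim_col S) (gs_perps S k) $$ (r,c) = Aent S k r c"
proof -
  have d: "\<forall>v\<in>set (gs_perps S k). dim_vec v = dim_col S"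
    by (auto simp: in_set_conv_nth gs_perps_dim)
  show ?thesis
    unfolding gs_proj_entry[OF d assms] Aent_def gG_def Nc_def
    by (simp add: gs_perps_nth)
qed

lemma gG_rec:
  assumes "r < dim_col S"
  shows "gG S j r = (\<Sum>c<dim_col S. Aent S j r c * S $$ (j, c))"
proof -
  have "gG S j r = (gs_proj (dim_col S) (gs_perps S j) *\<^sub>v row S j) $ r"
    unfolding gG_def by (simp add: nth_append)
  also have "\<dots> = (\<Sum>c<dim_col S. gs_proj (dim_col S) (gs_perps S j) $$ (r,c) * S $$ (j, c))"
    using assms by (simp add: scalar_prod_def row_def atLeast0LessThan)
  also have "\<dots> = (\<Sum>c<dim_col S. Aent S j r c * S $$ (j, c))"
    using assms by (intro sum.cong refl, simp add: gs_proj_perps_entry)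
  finally show ?thesis .
qed


lemma ip_cong: "(\<And>r. r < n \<Longrightarrow> x r = x' r) \<Longrightarrow> (\<And>r. r < n \<Longrightarrow> y r = y' r) \<Longrightarrow> ip n x y = ip n x' y'"
  unfolding ip_def by (rule sum.cong) auto

lemma ip_self: "ip n v v = complex_of_real (\<Sum>r<n. (cmod (v r))\<^sup>2)"
  unfolding ip_def of_real_sum by (rule sum.cong, simp, subst complex_norm_square, simp add: mult.commute)

lemma ip_self_zero: assumes "ip n v v = 0" "r < n" shows "v r = 0"
proof -
  have "(\<Sum>r<n. (cmod (v r))\<^sup>2) = 0" using assms(1) ip_self[of n v] by (metis of_real_eq_0_iff)
  then have "\<forall>r\<in>{..<n}. (cmod (v r))\<^sup>2 = 0" by (subst (asm) sum_nonneg_eq_0_iff) auto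
  then show ?thesis using assms(2) by simp
qed

lemma ip_diff: "ip n u (\<lambda>r. x r - y r) = ip n u x - ip n u y"
  unfolding ip_def by (simp add: sum_subtractf right_diff_distrib)

lemma ip_sum_right: "ip n u (\<lambda>r. \<Sum>j<k. g j r * a j) = (\<Sum>j<k. ip n u (g j) * a j)"
  unfolding ip_def by (simp add: sum_distrib_left sum_distrib_right mult.assoc sum.swap[of _ "{..<n}"])

lemma ip_sum_left: "ip n (\<lambda>r. \<Sum>j<k. a j * g j r) v = (\<Sum>j<k. cnj (a j) * ip n (g j) v)"
  unfolding ip_def by (simp add: sum_distrib_left sum_distrib_right mult.assoc mult.left_commute sum.swap[of _ "{..<n}"])

lemma ip_conj: "ip n u v = cnj (ip n v u)"
  unfolding ip_def by (simp add: mult.commute)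

definition Ax :: "nat \<Rightarrow> (nat \<Rightarrow> nat \<Rightarrow> complex) \<Rightarrow> nat \<Rightarrow> (nat \<Rightarrow> complex) \<Rightarrow> nat \<Rightarrow> complex" where
  "Ax n g k x r = x r - (\<Sum>j<k. g j r * (ip n (g j) x / ip n (g j) (g j)))"

lemma Ax_orth:
  assumes orth: "\<And>j l. j < k \<Longrightarrow> l < k \<Longrightarrow> j \<noteq> l \<Longrightarrow> ip n (g j) (g l) = 0"
    and l: "l < k"
  shows "ip n (g l) (Ax n g k x) = 0"
proof -
  have "ip n (g l) (Ax n g k x) = ip n (g l) x - (\<Sum>j<k. ip n (g l) (g j) * (ip n (g j) x / ip n (g j) (g j)))"
    unfolding Ax_def ip_diff ip_sum_right ..
  also have "(\<Sum>j<k. ip n (g l) (g j) * (ip n (g j) x / ip n (g j) (g j)))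
      = ip n (g l) (g l) * (ip n (g l) x / ip n (g l) (g l))"
    apply (subst sum.remove[of _ l]) using l apply auto[2]
    apply (subst sum.neutral) using orth l by auto
  also have "ip n (g l) x - \<dots> = 0"
  proof (cases "ip n (g l) (g l) = 0")
    case True
    then have "ip n (g l) x = 0" unfolding ip_def using ip_self_zero[OF True] by (intro sum.neutral) auto
    then show ?thesis by simp
  qed simp
  finally show ?thesis .
qed

definition spanG :: "nat \<Rightarrow> (nat \<Rightarrow> nat \<Rightarrow> complex) \<Rightarrow> nat \<Rightarrow> (nat \<Rightarrow> complex) \<Rightarrow> bool" where
  "spanG n g k f \<longleftrightarrow> (\<exists>a. \<forall>r<n. f r = (\<Sum>l<k. a l * g l r))"

lemma spanG_diff: "spanG n g k f \<Longrightarrow> spanG n g k f' \<Longrightarrow> spanG n g k (\<lambda>r. f r - f' r)"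
  unfolding spanG_def
proof (elim exE)
  fix a a' assume "\<forall>r<n. f r = (\<Sum>l<k. a l * g l r)" "\<forall>r<n. f' r = (\<Sum>l<k. a' l * g l r)"
  then show "\<exists>b. \<forall>r<n. f r - f' r = (\<Sum>l<k. b l * g l r)"
    by (intro exI[of _ "\<lambda>l. a l - a' l"]) (simp add: sum_subtractf left_diff_distrib)
qed

lemma spanG_Ax: "spanG n g k (\<lambda>r. x r - Ax n g k x r)"
  unfolding spanG_def Ax_def
  by (intro exI[of _ "\<lambda>j. ip n (g j) x / ip n (g j) (g j)"]) (simp add: mult.commute)

lemma spanG_orth_zero:
  assumes "spanG n g k f" "\<And>l. l < k \<Longrightarrow> ip n (g l) f = 0" "r < n"
  shows "f r = 0"
proof -
  obtain a where a: "\<forall>r<n. f r = (\<Sum>l<k. a l * g l r)" using assms(1) unfolding spanG_def by blast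
  have "ip n f f = ip n (\<lambda>r. \<Sum>l<k. a l * g l r) f" by (rule ip_cong) (use a in auto)
  also have "\<dots> = 0" unfolding ip_sum_left using assms(2) by simp
  finally show ?thesis using ip_self_zero assms(3) by blast
qed

lemma Ax_psd:
  assumes orth: "\<And>j l. j < k \<Longrightarrow> l < k \<Longrightarrow> j \<noteq> l \<Longrightarrow> ip n (g j) (g l) = 0"
  shows "Re (ip n x (Ax n g k x)) \<ge> 0"
proof -
  obtain a where a: "\<forall>r<n. x r - Ax n g k x r = (\<Sum>l<k. a l * g l r)"
    using spanG_Ax[of n g k x] unfolding spanG_def by blast
  have "ip n x (Ax n g k x) = ip n (\<lambda>r. Ax n g k x r + (\<Sum>l<k. a l * g l r)) (Ax n g k x)"
    by (rule ip_cong) (use a in \<open>auto simp: algebra_simps\<close>)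
  also have "\<dots> = ip n (Ax n g k x) (Ax n g k x) + ip n (\<lambda>r. \<Sum>l<k. a l * g l r) (Ax n g k x)"
    unfolding ip_def by (simp add: sum.distrib distrib_right)
  also have "ip n (\<lambda>r. \<Sum>l<k. a l * g l r) (Ax n g k x) = 0"
  proof -
    have "\<And>l. l<k \<Longrightarrow> ip n (g l) (Ax n g k x) = 0" using Ax_orth[of k n g] orth by blast
    then show ?thesis unfolding ip_sum_left by simp
  qed
  finally show ?thesis using ip_self[of n "Ax n g k x"] by (simp add: sum_nonneg)
qed


lemma Aent_apply:
  assumes "r < dim_col S"
  shows "(\<Sum>c<dim_col S. Aent S k r c * x c) = Ax (dim_col S) (gG S) k x r"
proof -
  let ?n = "dim_col S"
  have "(\<Sum>c<?n. Aent S k r c * x c) = (\<Sum>c<?n. (if r = c then 1 else 0) * x c)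
        - (\<Sum>c<?n. (\<Sum>j<k. gG S j r * cnj (gG S j c) / Nc S j) * x c)"
    unfolding Aent_def by (simp add: left_diff_distrib sum_subtractf)
  also have "(\<Sum>c<?n. (if r = c then 1 else 0) * x c) = (\<Sum>c<?n. if r = c then x c else 0)"
    by (rule sum.cong) auto
  also have "\<dots> = x r" using assms by simp
  also have "(\<Sum>c<?n. (\<Sum>j<k. gG S j r * cnj (gG S j c) / Nc S j) * x c)
      = (\<Sum>j<k. gG S j r * (ip ?n (gG S j) x / ip ?n (gG S j) (gG S j)))"
    unfolding ip_def Nc_def sum_distrib_right sum_distrib_left sum_divide_distrib
    by (subst sum.swap) (simp add: mult_ac ip_def)
  finally show ?thesis unfolding Ax_def .
qed

lemma gG_formula:
  assumes "r < dim_col S"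
  shows "gG S j r = Ax (dim_col S) (gG S) j (\<lambda>c. S $$ (j, c)) r"
  using gG_rec[OF assms] Aent_apply[OF assms] by simp

lemma gG_orth: "j < k \<Longrightarrow> l < k \<Longrightarrow> j \<noteq> l \<Longrightarrow> ip (dim_col S) (gG S j) (gG S l) = 0"
proof (induction k arbitrary: j l)
  case 0 then show ?case by simp
next
  case (Suc k)
  have A: "ip (dim_col S) (gG S l') (gG S k) = 0" if "l' < k" for l'
  proof -
    have "ip (dim_col S) (gG S l') (gG S k) = ip (dim_col S) (gG S l') (Ax (dim_col S) (gG S) k (\<lambda>c. S $$ (k, c)))"
      by (rule ip_cong) (auto simp: gG_formula)
    also have "\<dots> = 0" by (rule Ax_orth) (use Suc.IH that in auto)
    finally show ?thesis .
  qed
  show ?case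
  proof (cases "j < k \<and> l < k")
    case True then show ?thesis using Suc by auto
  next
    case False
    then have "(j = k \<and> l < k) \<or> (l = k \<and> j < k)" using Suc.prems by auto
    then show ?thesis
    proof
      assume "j = k \<and> l < k"
      then show ?thesis using A[of l] ip_conj[of "dim_col S" "gG S k" "gG S l"] by simp
    next
      assume "l = k \<and> j < k" then show ?thesis using A[of j] by simp
    qed
  qed
qed

definition inspan :: "complex mat \<Rightarrow> nat \<Rightarrow> (nat \<Rightarrow> complex) \<Rightarrow> bool" where
  "inspan S m f \<longleftrightarrow> (\<exists>b. \<forall>r<dim_col S. f r = (\<Sum>l<m. b l * S $$ (l, r)))"

lemma inspan_mono: assumes "inspan S m f" "m \<le> m'" shows "inspan S m' f"
proof -
  obtain b where b: "\<forall>r<dim_col S. f r = (\<Sum>l<m. b l * S $$ (l, r))" using assms unfolding inspan_def by blast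
  have "\<forall>r<dim_col S. f r = (\<Sum>l<m'. (if l < m then b l else 0) * S $$ (l, r))"
  proof (intro allI impI)
    fix r assume r: "r < dim_col S"
    have e1: "(\<Sum>l<m'. (if l < m then b l else 0) * S $$ (l, r)) = (\<Sum>l<m. (if l < m then b l else 0) * S $$ (l, r))"
      by (rule sum.mono_neutral_right) (use assms(2) in auto)
    have e2: "(\<Sum>l<m. (if l < m then b l else 0) * S $$ (l, r)) = (\<Sum>l<m. b l * S $$ (l, r))"
      by (rule sum.cong) auto
    have e3: "f r = (\<Sum>l<m. b l * S $$ (l, r))" using b r by blast
    show "f r = (\<Sum>l<m'. (if l < m then b l else 0) * S $$ (l, r))" unfolding e1 e2 e3 ..
  qed
  then show ?thesis unfolding inspan_def by (intro exI[of _ "\<lambda>l. if l < m then b l else 0"])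
qed

lemma inspan_lincomb:
  assumes "\<And>l. l < k \<Longrightarrow> inspan S m (g l)"
  shows "inspan S m (\<lambda>r. \<Sum>l<k. g l r * a l)"
proof -
  have "\<forall>l\<in>{..<k}. \<exists>b. \<forall>r<dim_col S. g l r = (\<Sum>l'<m. b l' * S $$ (l', r))"
    using assms unfolding inspan_def by blast
  from bchoice[OF this] obtain B where B: "\<forall>l\<in>{..<k}. \<forall>r<dim_col S. g l r = (\<Sum>l'<m. B l l' * S $$ (l', r))"
    by blast
  have "\<forall>r<dim_col S. (\<Sum>l<k. g l r * a l) = (\<Sum>l'<m. (\<Sum>l<k. a l * B l l') * S $$ (l', r))"
  proof (intro allI impI)
    fix r assume r: "r < dim_col S"
    have "(\<Sum>l<k. g l r * a l) = (\<Sum>l<k. (\<Sum>l'<m. B l l' * S $$ (l', r)) * a l)"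
      using B r by (intro sum.cong) auto
    also have "\<dots> = (\<Sum>l'<m. (\<Sum>l<k. a l * B l l') * S $$ (l', r))"
      unfolding sum_distrib_right by (subst sum.swap) (simp add: mult_ac)
    finally show "(\<Sum>l<k. g l r * a l) = (\<Sum>l'<m. (\<Sum>l<k. a l * B l l') * S $$ (l', r))" .
  qed
  then show ?thesis unfolding inspan_def by (intro exI[of _ "\<lambda>l'. \<Sum>l<k. a l * B l l'"])
qed

lemma inspan_diff: "inspan S m f \<Longrightarrow> inspan S m f' \<Longrightarrow> inspan S m (\<lambda>r. f r - f' r)"
  unfolding inspan_def
proof (elim exE)
  fix a a' assume "\<forall>r<dim_col S. f r = (\<Sum>l<m. a l * S $$ (l, r))" "\<forall>r<dim_col S. f' r = (\<Sum>l<m. a' l * S $$ (l, r))"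
  then show "\<exists>b. \<forall>r<dim_col S. f r - f' r = (\<Sum>l<m. b l * S $$ (l, r))"
    by (intro exI[of _ "\<lambda>l. a l - a' l"]) (simp add: sum_subtractf left_diff_distrib)
qed

lemma inspan_row: assumes "j < m" shows "inspan S m (\<lambda>r. S $$ (j, r))"
proof -
  have "S $$ (j, r) = (\<Sum>l<m. (if l = j then 1 else 0) * S $$ (l, r))" for r
  proof -
    have "(\<Sum>l<m. (if l = j then 1 else 0) * S $$ (l, r)) = (\<Sum>l<m. if l = j then S $$ (l, r) else 0)"
      by (rule sum.cong) auto
    then show ?thesis using assms by simp
  qed
  then show ?thesis unfolding inspan_def by (intro exI[of _ "\<lambda>l. if l = j then 1 else 0"]) fast
qed

lemma inspan_cong: "inspan S m f \<Longrightarrow> (\<And>r. r < dim_col S \<Longrightarrow> f r = f' r) \<Longrightarrow> inspan S m f'"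
  unfolding inspan_def by auto

lemma gG_inspan: "inspan S (Suc j) (gG S j)"
proof (induction j rule: less_induct)
  case (less j)
  have "inspan S (Suc j) (\<lambda>r. \<Sum>l<j. gG S l r * (ip (dim_col S) (gG S l) (\<lambda>c. S $$ (j, c)) / ip (dim_col S) (gG S l) (gG S l)))"
    by (rule inspan_lincomb, rule inspan_mono, rule less) auto
  note h = this
  have "inspan S (Suc j) (\<lambda>r. S $$ (j, r) - (\<Sum>l<j. gG S l r * (ip (dim_col S) (gG S l) (\<lambda>c. S $$ (j, c)) / ip (dim_col S) (gG S l) (gG S l))))"
    using inspan_diff[OF inspan_row[of j "Suc j" S] h] by simp
  from this show ?case by (rule inspan_cong) (subst (2) gG_formula, assumption, simp add: Ax_def)
qed

lemma F1: "inspan S k (\<lambda>r. x r - Ax (dim_col S) (gG S) k x r)"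
proof -
  have "inspan S k (\<lambda>r. \<Sum>l<k. gG S l r * (ip (dim_col S) (gG S l) x / ip (dim_col S) (gG S l) (gG S l)))"
    by (rule inspan_lincomb, rule inspan_mono, rule gG_inspan) auto
  then show ?thesis by (rule inspan_cong) (simp add: Ax_def)
qed

lemma row_spanG: assumes "j < k" shows "spanG (dim_col S) (gG S) k (\<lambda>c. S $$ (j, c))"
proof -
  let ?n = "dim_col S"
  define a where "a l = (if l < j then ip ?n (gG S l) (\<lambda>c. S $$ (j, c)) / ip ?n (gG S l) (gG S l) else if l = j then 1 else 0)" for l
  have "\<forall>r<?n. S $$ (j, r) = (\<Sum>l<k. a l * gG S l r)"
  proof (intro allI impI)
    fix r assume r: "r < ?n"
    have "(\<Sum>l<k. a l * gG S l r) = (\<Sum>l<Suc j. a l * gG S l r)"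
      by (rule sum.mono_neutral_right) (use assms in \<open>auto simp: a_def\<close>)
    also have "\<dots> = gG S j r + (\<Sum>l<j. gG S l r * (ip ?n (gG S l) (\<lambda>c. S $$ (j, c)) / ip ?n (gG S l) (gG S l)))"
      by (simp add: a_def mult.commute)
    also have "\<dots> = S $$ (j, r)" by (subst gG_formula[OF r]) (simp add: Ax_def)
    finally show "S $$ (j, r) = (\<Sum>l<k. a l * gG S l r)" by simp
  qed
  then show ?thesis unfolding spanG_def by blast
qed

lemma F2: assumes "j < k" "r < dim_col S"
  shows "Ax (dim_col S) (gG S) k (\<lambda>c. S $$ (j, c)) r = 0"
proof -
  let ?x = "\<lambda>c. S $$ (j, c)"
  have "spanG (dim_col S) (gG S) k (\<lambda>r. ?x r - (?x r - Ax (dim_col S) (gG S) k ?x r))"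
    by (rule spanG_diff[OF row_spanG[OF assms(1)] spanG_Ax])
  then have sp: "spanG (dim_col S) (gG S) k (Ax (dim_col S) (gG S) k ?x)" by simp
  show ?thesis
    by (rule spanG_orth_zero[OF sp _ assms(2)], rule Ax_orth) (metis gG_orth, assumption)
qed

lemma F3: "Re (ip (dim_col S) x (Ax (dim_col S) (gG S) k x)) \<ge> 0"
  by (rule Ax_psd) (metis gG_orth)


lemma char_poly_2x2:
  assumes C: "(C :: real mat) \<in> carrier_mat 2 2"
  shows "char_poly C = [:C $$ (0,0) * C $$ (1,1) - C $$ (0,1) * C $$ (1,0), - (C $$ (0,0) + C $$ (1,1)), 1:]"
proof -
  let ?P = "char_poly_matrix C"
  have P: "?P \<in> carrier_mat 2 2" using C by simp
  have e: "?P $$ (i,j) = (if i = j then [:0,1:] else 0) + [:- C $$ (i,j):]" if "i < 2" "j < 2" for i j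
    using C that unfolding char_poly_matrix_def by auto
  have "char_poly C = (\<Sum>i<2. ?P $$ (i,0) * cofactor ?P i 0)"
    unfolding char_poly_def by (rule laplace_expansion_column[OF P]) simp
  also have "\<dots> = ?P $$ (0,0) * cofactor ?P 0 0 + ?P $$ (1,0) * cofactor ?P 1 0"
    by (simp add: numeral_2_eq_2)
  also have "cofactor ?P 0 0 = ?P $$ (1,1)"
    unfolding cofactor_def using P by (subst det_single) (auto simp: mat_delete_def)
  also have "cofactor ?P 1 0 = - ?P $$ (0,1)"
    unfolding cofactor_def using P by (subst det_single) (auto simp: mat_delete_def)
  finally show ?thesis using e by (simp add: algebra_simps)
qed

lemma quad_factor:
  fixes d :: real
  assumes "1 - 4 * d \<ge> 0"
  defines "\<eta> \<equiv> (1 + sqrt (1 - 4 * d)) / 2"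
  shows "[:d, -1, 1:] = [:-\<eta>, 1:] * [:-(1-\<eta>), 1:]" "\<eta> * (1 - \<eta>) = d"
proof -
  have s: "sqrt (1 - 4 * d) ^ 2 = 1 - 4 * d" using assms(1) by simp
  show h: "\<eta> * (1 - \<eta>) = d" unfolding \<eta>_def using s by (simp add: field_simps power2_eq_square) 
  show "[:d, -1, 1:] = [:-\<eta>, 1:] * [:-(1-\<eta>), 1:]"
    using h by (simp add: algebra_simps)
qed


lemma char_poly_one_mat: "char_poly (1\<^sub>m p :: real mat) = [:-1,1:] ^ p"
proof -
  have "char_poly (1\<^sub>m p :: real mat) = (\<Prod>a\<leftarrow>diag_mat (1\<^sub>m p :: real mat). [:- a, 1:])"
    by (rule char_poly_upper_triangular[of _ p]) (auto simp: upper_triangular_def)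
  also have "diag_mat (1\<^sub>m p :: real mat) = replicate p 1"
    by (rule nth_equalityI) (auto simp: diag_mat_def)
  finally show ?thesis by (simp add: prod_list_replicate)
qed

lemma char_poly_zero_mat: "char_poly (0\<^sub>m p p :: real mat) = [:0,1:] ^ p"
proof -
  have "char_poly (0\<^sub>m p p :: real mat) = (\<Prod>a\<leftarrow>diag_mat (0\<^sub>m p p :: real mat). [:- a, 1:])"
    by (rule char_poly_upper_triangular[of _ p]) (auto simp: upper_triangular_def)
  also have "diag_mat (0\<^sub>m p p :: real mat) = replicate p 0"
    by (rule nth_equalityI) (auto simp: diag_mat_def)
  finally show ?thesis by (simp add: prod_list_replicate)
qed

lemma disc_aux: fixes a b p :: real assumes "a + b = 1"
  shows "1 - 4 * (a * b - p) = (a - b)^2 + 4 * p"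
proof -
  have "(a + b)^2 = 1" using assms by simp
  then have "a*a + 2*a*b + b*b = 1" by (simp add: power2_eq_square algebra_simps)
  then show ?thesis by (simp add: power2_eq_square algebra_simps)
qed

lemma char_poly_T:
  fixes T :: "real mat"
  assumes T: "T \<in> carrier_mat n n" and m: "2 \<le> m" "m \<le> n"
    and z1: "\<And>d c. d < n \<Longrightarrow> m \<le> d \<Longrightarrow> c < m \<Longrightarrow> T $$ (d,c) = 0"
    and z2: "\<And>d c. m \<le> d \<Longrightarrow> d < n \<Longrightarrow> m \<le> c \<Longrightarrow> c < n \<Longrightarrow> T $$ (d,c) = (if d = c then 1 else 0)"
    and z3: "\<And>d c. d < n \<Longrightarrow> 2 \<le> c \<Longrightarrow> c < m \<Longrightarrow> T $$ (d,c) = 0"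
    and tr: "T $$ (0,0) + T $$ (1,1) = 1" and off: "T $$ (0,1) * T $$ (1,0) \<ge> 0"
  defines "dd \<equiv> T $$ (0,0) * T $$ (1,1) - T $$ (0,1) * T $$ (1,0)"
  shows "\<exists>\<eta>. \<eta> * (1 - \<eta>) = dd \<and> char_poly T = [:-1,1:] ^ (n-m) * [:0,1:] ^ (m-2) * ([:-\<eta>, 1:] * [:-(1-\<eta>), 1:])"
proof -
  define T1 where "T1 = mat m m (\<lambda>(d,c). T $$ (d,c))"
  define T2 where "T2 = mat m (n-m) (\<lambda>(d,c). T $$ (d, c + m))"
  define C where "C = mat 2 2 (\<lambda>(d,c). T $$ (d,c))"
  define X where "X = mat (m-2) 2 (\<lambda>(d,c). T $$ (d + 2, c))"
  have TT: "T = four_block_mat T1 T2 (0\<^sub>m (n-m) m) (1\<^sub>m (n-m))"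
    by (rule eq_matI) (use T m in \<open>auto simp: T1_def T2_def z1 z2\<close>)
  have T11: "T1 = four_block_mat C (0\<^sub>m 2 (m-2)) X (0\<^sub>m (m-2) (m-2))"
  proof -
    have h: "\<And>i. \<not> i < 2 \<Longrightarrow> Suc (Suc (i - 2)) = i" by arith
    show ?thesis by (rule eq_matI) (use T m in \<open>auto simp: T1_def C_def X_def z3 h\<close>)
  qed
  have disc: "1 - 4 * dd \<ge> 0"
  proof -
    have "1 - 4 * dd = (T $$ (0,0) - T $$ (1,1))^2 + 4 * (T $$ (0,1) * T $$ (1,0))"
      unfolding dd_def using disc_aux[OF tr] .
    then show ?thesis using off by (smt (verit) zero_le_power2)
  qed
  define \<eta> where "\<eta> = (1 + sqrt (1 - 4 * dd)) / 2"
  note qf = quad_factor[OF disc, folded \<eta>_def]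
  have cC: "char_poly C = [:-\<eta>, 1:] * [:-(1-\<eta>), 1:]"
  proof -
    have "char_poly C = [:dd, -1, 1:]"
      by (subst char_poly_2x2) (auto simp: C_def dd_def tr[symmetric] numeral_2_eq_2)
    then show ?thesis using qf(1) by simp
  qed
  have "char_poly T1 = char_poly C * char_poly (0\<^sub>m (m-2) (m-2) :: real mat)"
    unfolding T11
    apply (rule char_poly_0_block'[OF refl])
    subgoal by (rule exI[of _ "[\<eta>, 1-\<eta>]"]) (simp add: cC)
    subgoal by (rule exI[of _ "replicate (m-2) 0"]) (simp add: char_poly_zero_mat prod_list_replicate)
    by (auto simp: C_def X_def)
  then have cT1: "char_poly T1 = [:-\<eta>, 1:] * [:-(1-\<eta>), 1:] * [:0,1:] ^ (m-2)"
    by (simp add: cC char_poly_zero_mat)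
  have "char_poly T = char_poly T1 * char_poly (1\<^sub>m (n-m) :: real mat)"
    unfolding TT
    apply (rule char_poly_0_block[OF refl])
    subgoal by (rule exI[of _ "[\<eta>, 1-\<eta>] @ replicate (m-2) 0"]) (simp add: cT1 prod_list_replicate mult.assoc del: mult_pCons_left mult_pCons_right)
    subgoal by (rule exI[of _ "replicate (n-m) 1"]) (simp add: char_poly_one_mat prod_list_replicate)
    by (auto simp: T1_def T2_def)
  then show ?thesis using qf(2) by (intro exI[of _ \<eta>]) (simp add: cT1 char_poly_one_mat mult_ac)
qed

lemma sim_char_poly:
  fixes M Q T :: "real mat"
  assumes M: "M \<in> carrier_mat n n" and Q: "Q \<in> carrier_mat n n" and T: "T \<in> carrier_mat n n"
    and dQ: "det Q \<noteq> 0" and MQ: "M * Q = Q * T"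
  shows "char_poly M = char_poly T"
proof -
  have "Q \<in> Units (ring_mat TYPE(real) n ())" by (rule det_non_zero_imp_unit[OF Q dQ])
  then obtain Qi where Qi: "Qi \<in> carrier_mat n n" "Qi * Q = 1\<^sub>m n" "Q * Qi = 1\<^sub>m n"
    unfolding Units_def ring_mat_def by auto
  have "M = M * (Q * Qi)" using M Qi by simp
  also have "\<dots> = (M * Q) * Qi" using M Q Qi by (simp add: assoc_mult_mat)
  also have "\<dots> = Q * T * Qi" unfolding MQ ..
  finally have "similar_mat_wit M T Q Qi" unfolding similar_mat_wit_def using M Q T Qi by auto
  then have "similar_mat M T" unfolding similar_mat_def by blast
  then show ?thesis by (rule char_poly_similar)
qed


definition svec :: "real \<Rightarrow> (nat \<Rightarrow> nat \<Rightarrow> real) \<Rightarrow> nat \<Rightarrow> nat \<Rightarrow> complex" where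
  "svec \<gamma> \<Phi> j r = (if j = 0 \<and> r = 0 then - \<i> * complex_of_real \<gamma> else 0) + complex_of_real (\<Phi> j r)"

lemma Re_svec: "Re (z * svec \<gamma> \<Phi> j r) = Re z * \<Phi> j r + (if j = 0 \<and> r = 0 then \<gamma> * Im z else 0)"
  unfolding svec_def by (auto simp: algebra_simps)

lemma Im_svec: "Im (z * svec \<gamma> \<Phi> j r) = Im z * \<Phi> j r - (if j = 0 \<and> r = 0 then \<gamma> * Re z else 0)"
  unfolding svec_def by (auto simp: algebra_simps)

lemma sum_single:
  assumes "a \<in> S" "finite S" "\<And>j. j \<in> S \<Longrightarrow> j \<noteq> a \<Longrightarrow> g j = 0"
  shows "sum g S = g a"
proof -
  have "sum g S = g a + sum g (S - {a})" by (rule sum.remove) (use assms in auto)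
  also have "sum g (S - {a}) = 0" by (rule sum.neutral) (use assms in auto)
  finally show ?thesis by simp
qed

lemma sum_if0: assumes "0 < (k::nat)" shows "(\<Sum>j<k. if j = 0 \<and> r = 0 then f j else 0) = (if r = 0 then f 0 else (0::real))"
proof (cases "r = 0")
  case True
  have "(\<Sum>j<k. if j = 0 \<and> r = 0 then f j else 0) = (\<Sum>j<k. if j = 0 then f j else 0)"
    using True by (intro sum.cong) auto
  also have "\<dots> = f 0" by (subst sum_single[of 0]) (use assms in auto)
  finally show ?thesis using True by simp
qed simp

lemma sum_delta_r: "c < (n::nat) \<Longrightarrow> (\<Sum>d<n. f d * (if d = c then 1 else 0)) = (f c :: 'a :: comm_ring_1)"
proof -
  assume c: "c < n"
  have "(\<Sum>d<n. f d * (if d = c then 1 else 0)) = (\<Sum>d<n. if d = c then f d else 0)" by (intro sum.cong) auto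
  also have "\<dots> = f c" by (subst sum_single[of c]) (use c in auto)
  finally show ?thesis .
qed

lemma split_sum:
  assumes "1 \<le> m" "m \<le> n"
  shows "(\<Sum>d<n. f d) = f 0 + (\<Sum>j<m-1. f (Suc j)) + (\<Sum>d\<in>{m..<n}. f d)"
proof -
  have u: "{..<n} = {..<m} \<union> {m..<n}" using assms by auto
  have "(\<Sum>d<n. f d) = (\<Sum>d<m. f d) + (\<Sum>d\<in>{m..<n}. f d)"
    unfolding u by (rule sum.union_disjoint) auto
  also have "(\<Sum>d<m. f d) = (\<Sum>d<Suc (m-1). f d)" using assms by simp
  also have "\<dots> = f 0 + (\<Sum>j<m-1. f (Suc j))" by (rule sum.lessThan_Suc_shift)
  finally show ?thesis .
qed

definition Qf :: "nat \<Rightarrow> (nat \<Rightarrow> nat \<Rightarrow> real) \<Rightarrow> nat \<Rightarrow> nat \<Rightarrow> real" where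
  "Qf m \<Phi> r c = (if c = 0 then (if r = 0 then 1 else 0) else if c < m then \<Phi> (c-1) r else (if r = c then 1 else 0))"

definition Tf :: "nat \<Rightarrow> real \<Rightarrow> (nat \<Rightarrow> nat \<Rightarrow> complex) \<Rightarrow> nat \<Rightarrow> nat \<Rightarrow> real" where
  "Tf m \<gamma> \<mu> d c = (if c = 1 then (if d = 0 then -(\<gamma>^2) * Re (\<mu> 0 0) else if d < m then \<gamma> * Im (\<mu> 0 (d-1)) else 0)
      else if c < m \<and> c \<noteq> 0 then 0
      else (if d = c then 1 else 0) - (if d = 0 then \<gamma> * Im (\<mu> c 0) else if d < m then Re (\<mu> c (d-1)) else 0))"

locale GSsetup =
  fixes n m :: nat and \<gamma> :: real and \<Phi> :: "nat \<Rightarrow> nat \<Rightarrow> real" and A :: "complex mat"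
    and \<mu> :: "nat \<Rightarrow> nat \<Rightarrow> complex"
  assumes A: "A \<in> carrier_mat n n" and m2: "2 \<le> m" and mn: "m \<le> n"
    and H1: "\<And>c r. c < n \<Longrightarrow> r < n \<Longrightarrow> (if r = c then 1 else 0) - A $$ (r,c) = (\<Sum>j<m-1. \<mu> c j * svec \<gamma> \<Phi> j r)"
    and H2: "\<And>j r. j < m-1 \<Longrightarrow> r < n \<Longrightarrow> (\<Sum>c<n. A $$ (r,c) * svec \<gamma> \<Phi> j c) = 0"
begin

lemma ReA: assumes "c < n" "r < n"
  shows "Re (A $$ (r,c)) = (if r = c then 1 else 0) - (if r = 0 then \<gamma> * Im (\<mu> c 0) else 0) - (\<Sum>j<m-1. Re (\<mu> c j) * \<Phi> j r)"
proof -
  have "A $$ (r,c) = (if r = c then 1 else 0) - (\<Sum>j<m-1. \<mu> c j * svec \<gamma> \<Phi> j r)"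
    using H1[OF assms] by (simp add: algebra_simps)
  then have "Re (A $$ (r,c)) = (if r = c then 1 else 0) - (\<Sum>j<m-1. Re (\<mu> c j * svec \<gamma> \<Phi> j r))"
    by simp
  also have "(\<Sum>j<m-1. Re (\<mu> c j * svec \<gamma> \<Phi> j r)) = (\<Sum>j<m-1. Re (\<mu> c j) * \<Phi> j r) + (\<Sum>j<m-1. if j = 0 \<and> r = 0 then \<gamma> * Im (\<mu> c j) else 0)"
    unfolding Re_svec sum.distrib ..
  also have "(\<Sum>j<m-1. if j = 0 \<and> r = 0 then \<gamma> * Im (\<mu> c j) else 0) = (if r = 0 then \<gamma> * Im (\<mu> c 0) else 0)"
    by (rule sum_if0) (use m2 in auto)
  finally show ?thesis by simp
qed

lemma ImA0: assumes "r < n"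
  shows "Im (A $$ (r,0)) = (if r = 0 then \<gamma> * Re (\<mu> 0 0) else 0) - (\<Sum>j<m-1. Im (\<mu> 0 j) * \<Phi> j r)"
proof -
  have n0: "0 < n" using assms by simp
  have "A $$ (r,0) = (if r = 0 then 1 else 0) - (\<Sum>j<m-1. \<mu> 0 j * svec \<gamma> \<Phi> j r)"
    using H1[OF n0 assms] by (simp add: algebra_simps)
  then have "Im (A $$ (r,0)) = - (\<Sum>j<m-1. Im (\<mu> 0 j * svec \<gamma> \<Phi> j r))"
    by simp
  also have "(\<Sum>j<m-1. Im (\<mu> 0 j * svec \<gamma> \<Phi> j r)) = (\<Sum>j<m-1. Im (\<mu> 0 j) * \<Phi> j r) - (\<Sum>j<m-1. if j = 0 \<and> r = 0 then \<gamma> * Re (\<mu> 0 j) else 0)"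
    unfolding Im_svec sum_subtractf ..
  also have "(\<Sum>j<m-1. if j = 0 \<and> r = 0 then \<gamma> * Re (\<mu> 0 j) else 0) = (if r = 0 then \<gamma> * Re (\<mu> 0 0) else 0)"
    by (rule sum_if0) (use m2 in auto)
  finally show ?thesis by simp
qed

lemma R3: assumes "r < n"
  shows "(\<Sum>d<n. Re (A $$ (r,d)) * \<Phi> 0 d) = - \<gamma> * Im (A $$ (r,0))"
proof -
  have n0: "0 < n" using assms by simp
  have "0 = (\<Sum>d<n. A $$ (r,d) * svec \<gamma> \<Phi> 0 d)" using H2[of 0 r] m2 assms by simp
  also have "\<dots> = (\<Sum>d<n. A $$ (r,d) * complex_of_real (\<Phi> 0 d)) - (\<Sum>d<n. if d = 0 then A $$ (r,d) * (\<i> * complex_of_real \<gamma>) else 0)"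
    unfolding sum_subtractf[symmetric] by (intro sum.cong) (auto simp: svec_def algebra_simps)
  also have "(\<Sum>d<n. if d = 0 then A $$ (r,d) * (\<i> * complex_of_real \<gamma>) else 0) = A $$ (r,0) * (\<i> * complex_of_real \<gamma>)"
    using n0 by simp
  finally have "(\<Sum>d<n. A $$ (r,d) * complex_of_real (\<Phi> 0 d)) = A $$ (r,0) * (\<i> * complex_of_real \<gamma>)" by simp
  then have "Re (\<Sum>d<n. A $$ (r,d) * complex_of_real (\<Phi> 0 d)) = Re (A $$ (r,0) * (\<i> * complex_of_real \<gamma>))" by simp
  then show ?thesis by (simp add: mult.commute)
qed

lemma R4: assumes "1 \<le> j" "j < m - 1" "r < n"
  shows "(\<Sum>d<n. Re (A $$ (r,d)) * \<Phi> j d) = 0"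
proof -
  have "0 = (\<Sum>d<n. A $$ (r,d) * svec \<gamma> \<Phi> j d)" using H2[of j r] assms by simp
  also have "\<dots> = (\<Sum>d<n. A $$ (r,d) * complex_of_real (\<Phi> j d))"
    by (intro sum.cong) (use assms in \<open>auto simp: svec_def\<close>)
  finally have "Re (\<Sum>d<n. A $$ (r,d) * complex_of_real (\<Phi> j d)) = 0" by simp
  then show ?thesis by simp
qed

definition "M = map_mat Re A"
definition "Q = mat n n (\<lambda>(r,c). Qf m \<Phi> r c)"
definition "T = mat n n (\<lambda>(d,c). Tf m \<gamma> \<mu> d c)"

lemma M_carrier: "M \<in> carrier_mat n n" and Q_carrier: "Q \<in> carrier_mat n n" and T_carrier: "T \<in> carrier_mat n n"
  using A by (auto simp: M_def Q_def T_def)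

lemma MQ_entry: assumes "r < n" "c < n"
  shows "(M * Q) $$ (r,c) = (\<Sum>d<n. Re (A $$ (r,d)) * Qf m \<Phi> d c)"
  using assms A by (simp add: M_def Q_def scalar_prod_def atLeast0LessThan)

lemma QT_entry: assumes "r < n" "c < n"
  shows "(Q * T) $$ (r,c) = (if r = 0 then 1 else 0) * Tf m \<gamma> \<mu> 0 c + (\<Sum>j<m-1. \<Phi> j r * Tf m \<gamma> \<mu> (Suc j) c)
     + (\<Sum>d\<in>{m..<n}. (if r = d then 1 else 0) * Tf m \<gamma> \<mu> d c)"
proof -
  have "(Q * T) $$ (r,c) = (\<Sum>d<n. Qf m \<Phi> r d * Tf m \<gamma> \<mu> d c)"
    using assms by (simp add: Q_def T_def scalar_prod_def atLeast0LessThan)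
  also have "\<dots> = Qf m \<Phi> r 0 * Tf m \<gamma> \<mu> 0 c + (\<Sum>j<m-1. Qf m \<Phi> r (Suc j) * Tf m \<gamma> \<mu> (Suc j) c)
     + (\<Sum>d\<in>{m..<n}. Qf m \<Phi> r d * Tf m \<gamma> \<mu> d c)"
    by (rule split_sum) (use m2 mn in auto)
  also have "(\<Sum>j<m-1. Qf m \<Phi> r (Suc j) * Tf m \<gamma> \<mu> (Suc j) c) = (\<Sum>j<m-1. \<Phi> j r * Tf m \<gamma> \<mu> (Suc j) c)"
    by (intro sum.cong) (auto simp: Qf_def)
  also have "(\<Sum>d\<in>{m..<n}. Qf m \<Phi> r d * Tf m \<gamma> \<mu> d c) = (\<Sum>d\<in>{m..<n}. (if r = d then 1 else 0) * Tf m \<gamma> \<mu> d c)"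
    using m2 by (intro sum.cong) (auto simp: Qf_def)
  finally show ?thesis by (simp add: Qf_def)
qed

end

context GSsetup begin

lemma MQ_QT: "M * Q = Q * T"
proof (rule eq_matI)
  fix r c assume rr: "r < dim_row (Q * T)" and cc: "c < dim_col (Q * T)"
  then have r: "r < n" and c: "c < n" by (auto simp: Q_def T_def)
  have m1: "Suc j < m" if "j < m - 1" for j using that m2 by arith
  have mpos: "0 < m" "1 < m" using m2 by auto
  consider "c = 0" | "c = 1" | "2 \<le> c \<and> c < m" | "m \<le> c" by linarith
  then show "(M * Q) $$ (r,c) = (Q * T) $$ (r,c)"
  proof cases
    case 1
    have "(M * Q) $$ (r,c) = (\<Sum>d<n. Re (A $$ (r,d)) * (if d = 0 then 1 else 0))"
      unfolding MQ_entry[OF r c] using 1 by (intro sum.cong) (auto simp: Qf_def)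
    also have "\<dots> = Re (A $$ (r,0))" by (rule sum_delta_r) (use c 1 in auto)
    also have "\<dots> = (if r = 0 then 1 else 0) - (if r = 0 then \<gamma> * Im (\<mu> 0 0) else 0) - (\<Sum>j<m-1. Re (\<mu> 0 j) * \<Phi> j r)"
      using ReA[of 0 r] c 1 r by simp
    finally have L: "(M * Q) $$ (r,c) = \<dots>" .
    have s1: "(\<Sum>j<m-1. \<Phi> j r * Tf m \<gamma> \<mu> (Suc j) c) = (\<Sum>j<m-1. - (Re (\<mu> 0 j) * \<Phi> j r))"
      by (intro sum.cong refl) (use m1 1 in \<open>auto simp: Tf_def\<close>)
    have s2: "(\<Sum>d\<in>{m..<n}. (if r = d then 1 else 0) * Tf m \<gamma> \<mu> d c) = 0"
      by (rule sum.neutral) (use mpos 1 in \<open>auto simp: Tf_def\<close>)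
    have t0: "Tf m \<gamma> \<mu> 0 c = 1 - \<gamma> * Im (\<mu> 0 0)" using 1 mpos by (simp add: Tf_def)
    show ?thesis unfolding L QT_entry[OF r c] s1 s2 t0 sum_negf by (cases "r = 0") auto
  next
    case 2
    have "(M * Q) $$ (r,c) = (\<Sum>d<n. Re (A $$ (r,d)) * \<Phi> 0 d)"
      unfolding MQ_entry[OF r c] using mpos 2 by (intro sum.cong) (auto simp: Qf_def)
    also have "\<dots> = - \<gamma> * Im (A $$ (r,0))" by (rule R3[OF r])
    also have "\<dots> = - \<gamma> * ((if r = 0 then \<gamma> * Re (\<mu> 0 0) else 0) - (\<Sum>j<m-1. Im (\<mu> 0 j) * \<Phi> j r))"
      using ImA0[OF r] by simp
    finally have L: "(M * Q) $$ (r,c) = \<dots>" .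
    have s1: "(\<Sum>j<m-1. \<Phi> j r * Tf m \<gamma> \<mu> (Suc j) c) = (\<Sum>j<m-1. \<gamma> * (Im (\<mu> 0 j) * \<Phi> j r))"
      by (intro sum.cong refl) (use m1 2 in \<open>auto simp: Tf_def\<close>)
    have s2: "(\<Sum>d\<in>{m..<n}. (if r = d then 1 else 0) * Tf m \<gamma> \<mu> d c) = 0"
      by (rule sum.neutral) (use mpos 2 in \<open>auto simp: Tf_def\<close>)
    have t0: "Tf m \<gamma> \<mu> 0 c = -(\<gamma>^2) * Re (\<mu> 0 0)" using 2 by (simp add: Tf_def)
    show ?thesis unfolding L QT_entry[OF r c] s1 s2 t0 sum_distrib_left[symmetric]
      by (cases "r = 0") (auto simp: algebra_simps power2_eq_square)
  next
    case 3
    have "(M * Q) $$ (r,c) = (\<Sum>d<n. Re (A $$ (r,d)) * \<Phi> (c-1) d)"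
      unfolding MQ_entry[OF r c] using 3 by (intro sum.cong) (auto simp: Qf_def)
    also have "\<dots> = 0" by (rule R4) (use 3 r in auto)
    finally have L: "(M * Q) $$ (r,c) = 0" .
    have t: "Tf m \<gamma> \<mu> d c = 0" for d using 3 by (simp add: Tf_def)
    show ?thesis unfolding L QT_entry[OF r c] t by simp
  next
    case 4
    have "(M * Q) $$ (r,c) = (\<Sum>d<n. Re (A $$ (r,d)) * (if d = c then 1 else 0))"
      unfolding MQ_entry[OF r c] using 4 m2 by (intro sum.cong) (auto simp: Qf_def)
    also have "\<dots> = Re (A $$ (r,c))" by (rule sum_delta_r) (use c in auto)
    also have "\<dots> = (if r = c then 1 else 0) - (if r = 0 then \<gamma> * Im (\<mu> c 0) else 0) - (\<Sum>j<m-1. Re (\<mu> c j) * \<Phi> j r)"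
      using ReA[OF c r] by simp
    finally have L: "(M * Q) $$ (r,c) = \<dots>" .
    have s1: "(\<Sum>j<m-1. \<Phi> j r * Tf m \<gamma> \<mu> (Suc j) c) = (\<Sum>j<m-1. - (Re (\<mu> c j) * \<Phi> j r))"
      by (intro sum.cong refl) (use m1 4 m2 in \<open>auto simp: Tf_def\<close>)
    have s2: "(\<Sum>d\<in>{m..<n}. (if r = d then 1 else 0) * Tf m \<gamma> \<mu> d c) = (if r = c then 1 else 0)"
    proof -
      have "(\<Sum>d\<in>{m..<n}. (if r = d then 1 else 0) * Tf m \<gamma> \<mu> d c) = (if r = c then 1 else 0) * Tf m \<gamma> \<mu> c c"
        by (rule sum_single) (use 4 c m2 in \<open>auto simp: Tf_def\<close>)
      also have "Tf m \<gamma> \<mu> c c = 1" using 4 m2 by (simp add: Tf_def)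
      finally show ?thesis by simp
    qed
    have t0: "Tf m \<gamma> \<mu> 0 c = - (\<gamma> * Im (\<mu> c 0))" using 4 m2 by (simp add: Tf_def)
    show ?thesis unfolding L QT_entry[OF r c] s1 s2 t0 sum_negf by (cases "r = 0"; cases "r = c") auto
  qed
qed (use A in \<open>auto simp: M_def Q_def T_def\<close>)

end


context GSsetup begin

lemma det_Q: "det Q = det (mat (m-1) (m-1) (\<lambda>(r,c). \<Phi> c (r+1)))"
proof -
  define Q1 where "Q1 = mat m m (\<lambda>(r,c). Qf m \<Phi> r c)"
  define Q3 where "Q3 = mat (n-m) m (\<lambda>(r,c). Qf m \<Phi> (r+m) c)"
  define R where "R = mat 1 (m-1) (\<lambda>(r,c). \<Phi> c 0)"
  define D where "D = mat (m-1) (m-1) (\<lambda>(r,c). \<Phi> c (r+1))"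
  have h: "\<And>i. \<not> i < 1 \<Longrightarrow> Suc (i - 1) = i" by arith
  have QQ: "Q = four_block_mat Q1 (0\<^sub>m m (n-m)) Q3 (1\<^sub>m (n-m))"
    by (rule eq_matI) (use mn in \<open>auto simp: Q_def Q1_def Q3_def Qf_def\<close>)
  have Q11: "Q1 = four_block_mat (1\<^sub>m 1) R (0\<^sub>m (m-1) 1) D"
    by (rule eq_matI) (use m2 in \<open>auto simp: Q1_def R_def D_def Qf_def h\<close>)
  have "det Q = det Q1 * det (1\<^sub>m (n-m) :: real mat)"
    unfolding QQ by (rule det_four_block_mat_upper_right_zero) (auto simp: Q1_def Q3_def)
  also have "det Q1 = det (1\<^sub>m 1 :: real mat) * det D"
    unfolding Q11 by (rule det_four_block_mat_lower_left_zero) (auto simp: R_def D_def)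
  finally show ?thesis by (simp add: D_def)
qed

lemma T_props:
  shows "\<And>d c. d < n \<Longrightarrow> m \<le> d \<Longrightarrow> c < m \<Longrightarrow> T $$ (d,c) = 0"
    and "\<And>d c. m \<le> d \<Longrightarrow> d < n \<Longrightarrow> m \<le> c \<Longrightarrow> c < n \<Longrightarrow> T $$ (d,c) = (if d = c then 1 else 0)"
    and "\<And>d c. d < n \<Longrightarrow> 2 \<le> c \<Longrightarrow> c < m \<Longrightarrow> T $$ (d,c) = 0"
    and "T $$ (0,0) + T $$ (1,1) = 1"
  using m2 mn by (auto simp: T_def Tf_def)

lemma T_off: "T $$ (0,1) * T $$ (1,0) \<ge> 0"
proof -
  have "T $$ (0,1) * T $$ (1,0) = (\<gamma> * Re (\<mu> 0 0))^2" using m2 mn by (simp add: T_def Tf_def power2_eq_square)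
  then show ?thesis by simp
qed

lemma charM: "\<exists>\<eta>. char_poly M = [:-1,1:] ^ (n-m) * [:0,1:] ^ (m-2) * ([:-\<eta>, 1:] * [:-(1-\<eta>), 1:])"
  if dQ: "det (mat (m-1) (m-1) (\<lambda>(r,c). \<Phi> c (r+1))) \<noteq> 0"
proof -
  have "char_poly M = char_poly T"
    by (rule sim_char_poly[OF M_carrier Q_carrier T_carrier _ MQ_QT]) (use dQ det_Q in simp)
  moreover obtain \<eta> where "char_poly T = [:-1,1:] ^ (n-m) * [:0,1:] ^ (m-2) * ([:-\<eta>, 1:] * [:-(1-\<eta>), 1:])"
    using char_poly_T[OF T_carrier m2 mn T_props T_off] by blast
  ultimately show ?thesis by auto
qed

end

lemma eta_range:
  fixes M :: "real mat" and p :: "real poly"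
  assumes M: "M \<in> carrier_mat n n"
    and cp: "char_poly M = p * ([:-\<eta>, 1:] * [:-(1-\<eta>), 1:])"
    and psd: "\<And>v. v \<in> carrier_vec n \<Longrightarrow> 0 \<le> v \<bullet> (M *\<^sub>v v)"
  shows "0 \<le> \<eta> \<and> \<eta> \<le> 1"
proof (rule ccontr)
  assume "\<not> (0 \<le> \<eta> \<and> \<eta> \<le> 1)"
  then obtain l where l: "l < 0" "l = \<eta> \<or> l = 1 - \<eta>" by force
  have z1: "poly [:-\<eta>, 1:] \<eta> = 0" and z2: "poly [:-(1-\<eta>), 1:] (1-\<eta>) = 0" by simp_all
  have "poly (char_poly M) l = 0" unfolding cp poly_mult using l(2) z1 z2 by (elim disjE) simp_all
  then have "eigenvalue M l" using eigenvalue_root_char_poly[OF M] by simp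
  then obtain v where v: "v \<in> carrier_vec n" "v \<noteq> 0\<^sub>v n" "M *\<^sub>v v = l \<cdot>\<^sub>v v"
    unfolding eigenvalue_def eigenvector_def using M by auto
  obtain i where i: "i < n" "v $ i \<noteq> 0"
  proof (rule ccontr)
    assume "\<not> thesis"
    then have "\<forall>i<n. v $ i = 0" using that by blast
    then have "v = 0\<^sub>v n" using v(1) by (intro eq_vecI) auto
    then show False using v(2) by simp
  qed
  have pos: "0 < v \<bullet> v"
    unfolding scalar_prod_def
    by (rule sum_pos2[of _ i]) (use i v(1) in \<open>auto simp: zero_less_mult_iff linorder_neq_iff\<close>)
  have "v \<bullet> (M *\<^sub>v v) = l * (v \<bullet> v)" unfolding v(3) using v(1) by simp
  also have "\<dots> < 0" using pos l(1) by (simp add: mult_neg_pos)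
  finally show False using psd[OF v(1)] by simp
qed


lemma S_entry: "j < MR \<Longrightarrow> r < MT \<Longrightarrow> S_mat MR MT Phi $$ (j, r) = svec (sqrt (real MT * real MR)) (\<lambda>a b. Phi (a, b)) j r"
  unfolding S_mat_def svec_def by simp

lemma S_dims[simp]: "dim_col (S_mat MR MT Phi) = MT" "dim_row (S_mat MR MT Phi) = MR"
  unfolding S_mat_def by simp_all

lemma mset_poly: fixes \<eta> :: real shows "prod_mset (image_mset (\<lambda>x. [:- x, 1:]) (replicate_mset a 1 + replicate_mset b 0 + {#\<eta>, 1 - \<eta>#}))
  = [:-1,1:] ^ a * [:0,1:] ^ b * ([:-\<eta>, 1:] * [:-(1-\<eta>), 1:])"
proof -
  let ?f = "\<lambda>x::real. [:- x, 1:]"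
  have "prod_mset (image_mset ?f (replicate_mset a 1 + replicate_mset b 0 + {#\<eta>, 1 - \<eta>#}))
     = ?f 1 ^ a * ?f 0 ^ b * (?f \<eta> * ?f (1 - \<eta>))"
    by (simp del: mult_pCons_left mult_pCons_right)
  also have "?f 0 = [:0,1:]" by simp
  finally show ?thesis by simp
qed

lemma alg_main:
  assumes i: "2 \<le> i" "i \<le> MR" and MRT: "MR \<le> MT"
    and dD: "det (mat (i-1) (i-1) (\<lambda>(r,c). Phi (c, r+1))) \<noteq> 0"
  shows "\<exists>\<eta>\<in>{0..1}. has_eigenvalues (Re_mat (gs_A (S_mat MR MT Phi) i))
           (replicate_mset (MT - i) 1 + replicate_mset (i - 2) 0 + {#\<eta>, 1 - \<eta>#})"
proof -
  define S where "S = S_mat MR MT Phi"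
  define A where "A = gs_A S i"
  define \<gamma> where "\<gamma> = sqrt (real MT * real MR)"
  define \<Phi> where "\<Phi> = (\<lambda>a b. Phi (a, b))"
  have dc: "dim_col S = MT" unfolding S_def by simp
  have A_carr: "A \<in> carrier_mat MT MT" unfolding A_def gs_A_def dc[symmetric] by auto
  have Aent: "A $$ (r,c) = Aent S (i-1) r c" if "r < MT" "c < MT" for r c
    unfolding A_def gs_A_def using gs_proj_perps_entry[of r S c "i - 1"] that dc by simp
  have Sent: "S $$ (j, r) = svec \<gamma> \<Phi> j r" if "j < MR" "r < MT" for j r
    unfolding S_def \<gamma>_def \<Phi>_def using S_entry[OF that] by simp
  have H1ex: "\<forall>c\<in>{..<MT}. \<exists>\<beta>. \<forall>r<MT. (if r = c then 1 else 0) - A $$ (r,c) = (\<Sum>j<i-1. \<beta> j * svec \<gamma> \<Phi> j r)"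
  proof
    fix c assume "c \<in> {..<MT}"
    then have c: "c < MT" by simp
    define x where "x = (\<lambda>t. if t = c then (1::complex) else 0)"
    have ax: "Ax (dim_col S) (gG S) (i-1) x r = A $$ (r,c)" if r: "r < MT" for r
    proof -
      have "Ax (dim_col S) (gG S) (i-1) x r = (\<Sum>t<MT. Aent S (i-1) r t * x t)"
        using Aent_apply[of r S "i-1" x] r dc by simp
      also have "\<dots> = Aent S (i-1) r c" unfolding x_def by (rule sum_delta_r[OF c])
      finally show ?thesis using Aent[OF r c] by simp
    qed
    obtain \<beta> where \<beta>: "\<forall>r<dim_col S. x r - Ax (dim_col S) (gG S) (i-1) x r = (\<Sum>l<i-1. \<beta> l * S $$ (l, r))"
      using F1[of S "i-1" x] unfolding inspan_def by blast
    have "\<forall>r<MT. (if r = c then 1 else 0) - A $$ (r,c) = (\<Sum>j<i-1. \<beta> j * svec \<gamma> \<Phi> j r)"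
    proof (intro allI impI)
      fix r assume r: "r < MT"
      have e0: "(if r = c then 1 else 0) - A $$ (r,c) = x r - Ax (dim_col S) (gG S) (i-1) x r"
        unfolding ax[OF r] by (simp add: x_def)
      have "(if r = c then 1 else 0) - A $$ (r,c) = (\<Sum>l<i-1. \<beta> l * S $$ (l, r))"
        unfolding e0 using \<beta> r dc by simp
      also have "\<dots> = (\<Sum>j<i-1. \<beta> j * svec \<gamma> \<Phi> j r)"
        by (intro sum.cong refl) (use i r in \<open>simp add: Sent\<close>)
      finally show "(if r = c then 1 else 0) - A $$ (r,c) = (\<Sum>j<i-1. \<beta> j * svec \<gamma> \<Phi> j r)" .
    qed
    then show "\<exists>\<beta>. \<forall>r<MT. (if r = c then 1 else 0) - A $$ (r,c) = (\<Sum>j<i-1. \<beta> j * svec \<gamma> \<Phi> j r)" by blast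
  qed
  from bchoice[OF H1ex] obtain \<mu> where \<mu>: "\<forall>c\<in>{..<MT}. \<forall>r<MT. (if r = c then 1 else 0) - A $$ (r,c) = (\<Sum>j<i-1. \<mu> c j * svec \<gamma> \<Phi> j r)"
    by blast
  have H2: "(\<Sum>c<MT. A $$ (r,c) * svec \<gamma> \<Phi> j c) = 0" if j: "j < i - 1" and r: "r < MT" for j r
  proof -
    have "(\<Sum>c<MT. A $$ (r,c) * svec \<gamma> \<Phi> j c) = (\<Sum>c<MT. Aent S (i-1) r c * S $$ (j, c))"
      by (intro sum.cong refl) (use j r i in \<open>simp add: Aent Sent\<close>)
    also have "\<dots> = Ax (dim_col S) (gG S) (i-1) (\<lambda>c. S $$ (j, c)) r"
      using Aent_apply[of r S "i-1"] r dc by simp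
    also have "\<dots> = 0" by (rule F2) (use j r dc in auto)
    finally show ?thesis .
  qed
  interpret G: GSsetup MT i \<gamma> \<Phi> A \<mu>
    by unfold_locales (use A_carr i MRT \<mu> H2 in auto)
  have dD': "det (mat (i-1) (i-1) (\<lambda>(r,c). \<Phi> c (r+1))) \<noteq> 0" using dD unfolding \<Phi>_def by simp
  obtain \<eta> where cp: "char_poly G.M = [:-1,1:] ^ (MT-i) * [:0,1:] ^ (i-2) * ([:-\<eta>, 1:] * [:-(1-\<eta>), 1:])"
    using G.charM[OF dD'] by blast
  have psd: "0 \<le> v \<bullet> (G.M *\<^sub>v v)" if v: "v \<in> carrier_vec MT" for v
  proof -
    define xc where "xc = (\<lambda>t. complex_of_real (v $ t))"
    have "v \<bullet> (G.M *\<^sub>v v) = (\<Sum>r<MT. v $ r * (\<Sum>c<MT. Re (A $$ (r,c)) * v $ c))"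
      using v A_carr by (simp add: G.M_def scalar_prod_def atLeast0LessThan)
    also have "\<dots> = Re (ip (dim_col S) xc (Ax (dim_col S) (gG S) (i-1) xc))"
    proof -
      have "Ax (dim_col S) (gG S) (i-1) xc r = (\<Sum>c<MT. A $$ (r,c) * xc c)" if "r < MT" for r
        using Aent_apply[of r S "i-1" xc] that dc by (simp add: Aent)
      then have "ip (dim_col S) xc (Ax (dim_col S) (gG S) (i-1) xc) = (\<Sum>r<MT. xc r * (\<Sum>c<MT. A $$ (r,c) * xc c))"
        unfolding ip_def dc by (intro sum.cong refl) (simp add: xc_def)
      then show ?thesis by (simp add: xc_def Re_sum)
    qed
    also have "\<dots> \<ge> 0" by (rule F3)
    finally show ?thesis .
  qed
  have "0 \<le> \<eta> \<and> \<eta> \<le> 1"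
    by (rule eta_range[OF G.M_carrier cp psd])
  moreover have "G.M = Re_mat (gs_A (S_mat MR MT Phi) i)"
  proof -
    have "G.M = map_mat Re A" by (rule G.M_def)
    then show ?thesis unfolding Re_mat_def A_def S_def by simp
  qed
  ultimately show ?thesis unfolding has_eigenvalues_def mset_poly using cp by auto
qed


lemma measurable_det:
  fixes f :: "'a \<Rightarrow> nat \<Rightarrow> nat \<Rightarrow> real"
  assumes "\<And>r c. r < k \<Longrightarrow> c < k \<Longrightarrow> (\<lambda>x. f x r c) \<in> borel_measurable N"
  shows "(\<lambda>x. det (mat k k (\<lambda>(r,c). f x r c))) \<in> borel_measurable N"
proof -
  have e: "det (mat k k (\<lambda>(r,c). f x r c)) = (\<Sum>p\<in>{p. p permutes {0..<k}}. signof p * (\<Prod>i\<in>{0..<k}. f x i (p i)))" for x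
  proof -
    have "det (mat k k (\<lambda>(r,c). f x r c)) = (\<Sum>p\<in>{p. p permutes {0..<k}}. signof p * (\<Prod>i\<in>{0..<k}. mat k k (\<lambda>(r,c). f x r c) $$ (i, p i)))"
      by (rule det_def') simp
    also have "\<dots> = (\<Sum>p\<in>{p. p permutes {0..<k}}. signof p * (\<Prod>i\<in>{0..<k}. f x i (p i)))"
    proof (intro sum.cong refl arg_cong2[where f = "(*)"] prod.cong)
      fix p i assume "p \<in> {p. p permutes {0..<k}}" "i \<in> {0..<k}"
      then have "p i < k" by (auto dest: permutes_in_image)
      then show "mat k k (\<lambda>(r,c). f x r c) $$ (i, p i) = f x i (p i)" using \<open>i \<in> {0..<k}\<close> by simp
    qed
    finally show ?thesis .
  qed
  have m: "(\<lambda>x. signof p * (\<Prod>i\<in>{0..<k}. f x i (p i))) \<in> borel_measurable N" if "p permutes {0..<k}" for p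
  proof -
    have "(\<lambda>x. \<Prod>i\<in>{0..<k}. f x i (p i)) \<in> borel_measurable N"
    proof (rule borel_measurable_prod)
      fix i assume "i \<in> {0..<k}"
      then have "p i < k" "i < k" using that by (auto dest: permutes_in_image)
      then show "(\<lambda>x. f x i (p i)) \<in> borel_measurable N" using assms by simp
    qed
    then show ?thesis by measurable
  qed
  show ?thesis unfolding e by (rule borel_measurable_sum) (use m in auto)
qed

lemma null_graph:
  fixes N :: "real measure" and I :: "'i set" and a :: 'i
  assumes I: "finite I" "a \<in> I"
    and sfN: "sigma_finite_measure N" and spN: "space N = UNIV" and setsN: "sets N = sets borel"
    and noatom: "\<And>c. emeasure N {c} = 0"
    and h: "h \<in> borel_measurable (PiM I (\<lambda>_. N))"
    and hinv: "\<And>x y. x \<in> space (PiM I (\<lambda>_. N)) \<Longrightarrow> h (x(a := y)) = h x"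
  shows "{x \<in> space (PiM I (\<lambda>_. N)). x a = h x} \<in> null_sets (PiM I (\<lambda>_. N))"
proof -
  let ?M = "\<lambda>_::'i. N"
  let ?S = "{x \<in> space (PiM I ?M). x a = h x}"
  interpret ps: product_sigma_finite ?M by (simp add: product_sigma_finite_def sfN)
  have comp: "(\<lambda>x. x a) \<in> borel_measurable (PiM I ?M)"
    using measurable_component_singleton[OF I(2), of ?M] setsN by (simp add: measurable_def)
  have S: "?S \<in> sets (PiM I ?M)" using comp h by measurable
  have II: "I = insert a (I - {a})" using I by auto
  have "emeasure (PiM I ?M) ?S = (\<integral>\<^sup>+ x. indicator ?S x \<partial>PiM I ?M)"
    using S by simp
  also have "\<dots> = (\<integral>\<^sup>+ x. (\<integral>\<^sup>+ y. indicator ?S (x(a := y)) \<partial>N) \<partial>PiM (I - {a}) ?M)"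
    apply (subst II)
    apply (rule ps.product_nn_integral_insert)
    using I S II by auto
  also have "\<dots> = (\<integral>\<^sup>+ x. 0 \<partial>PiM (I - {a}) ?M)"
  proof (rule nn_integral_cong)
    fix x assume x: "x \<in> space (PiM (I - {a}) ?M)"
    have xs: "x(a := y) \<in> space (PiM I ?M)" for y
      using x spN I(2) by (auto simp: space_PiM PiE_def extensional_def Pi_def)
    have "indicator ?S (x(a := y)) = (indicator {h (x(a := 0))} y :: ennreal)" for y
    proof -
      have "h (x(a := y)) = h (x(a := 0))"
        using hinv[OF xs[of 0], of y] by simp
      then show ?thesis using xs[of y] by (auto simp: indicator_def)
    qed
    then have "(\<integral>\<^sup>+ y. indicator ?S (x(a := y)) \<partial>N) = (\<integral>\<^sup>+ y. indicator {h (x(a := 0))} y \<partial>N)"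
      by simp
    also have "\<dots> = emeasure N {h (x(a := 0))}"
      by (rule nn_integral_indicator) (simp add: setsN)
    also have "\<dots> = 0" by (rule noatom)
    finally show "(\<integral>\<^sup>+ y. indicator ?S (x(a := y)) \<partial>N) = 0" .
  qed
  also have "\<dots> = 0" by simp
  finally show ?thesis using S by (simp add: null_sets_def)
qed

lemma normal_facts: fixes \<sigma> :: real
  assumes s: "0 < \<sigma>"
  defines "N \<equiv> density lborel (normal_density 0 \<sigma>)"
  shows "sigma_finite_measure N" "space N = UNIV" "sets N = sets borel" "\<And>c. emeasure N {c} = 0"
proof -
  interpret prob_space N unfolding N_def using s by (rule prob_space_normal_density)
  show "sigma_finite_measure N" by unfold_locales
  show "space N = UNIV" "sets N = sets borel" unfolding N_def by simp_all
  fix c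
  have "emeasure N {c} = (\<integral>\<^sup>+ x. ennreal (normal_density 0 \<sigma> x) * indicator {c} x \<partial>lborel)"
    unfolding N_def by (rule emeasure_density) auto
  also have "\<dots> = ennreal (normal_density 0 \<sigma> c) * emeasure lborel {c}"
    by (rule nn_integral_indicator_singleton) simp
  finally show "emeasure N {c} = 0" by simp
qed


definition Dm :: "nat \<Rightarrow> (nat \<times> nat \<Rightarrow> real) \<Rightarrow> real mat" where
  "Dm k x = mat k k (\<lambda>(r,c). x (c, r+1))"

lemma det_Dm0: "det (Dm 0 x) = 1"
proof -
  have "Dm 0 x = 1\<^sub>m 0" by (rule eq_matI) (auto simp: Dm_def)
  then show ?thesis by simp
qed

lemma mat_delete_Dm: assumes "r < Suc k"
  shows "mat_delete (Dm (Suc k) x) r k = mat k k (\<lambda>(i,j). x (j, (if i < r then i else Suc i) + 1))"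
  by (rule eq_matI) (auto simp: mat_delete_def Dm_def)

lemma cof_kk: "cofactor (Dm (Suc k) x) k k = det (Dm k x)"
proof -
  have "mat_delete (Dm (Suc k) x) k k = Dm k x"
    by (rule eq_matI) (auto simp: mat_delete_def Dm_def)
  moreover have "(-1::real) ^ (k + k) = 1" by (simp add: mult_2[symmetric] power_mult)
  ultimately show ?thesis unfolding cofactor_def by simp
qed

lemma laplace_Dm:
  "det (Dm (Suc k) x) = (\<Sum>r<k. x (k, r+1) * cofactor (Dm (Suc k) x) r k) + x (k, Suc k) * det (Dm k x)"
proof -
  have "det (Dm (Suc k) x) = (\<Sum>r<Suc k. Dm (Suc k) x $$ (r,k) * cofactor (Dm (Suc k) x) r k)"
    by (rule laplace_expansion_column) (auto simp: Dm_def)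
  also have "\<dots> = (\<Sum>r<k. x (k, r+1) * cofactor (Dm (Suc k) x) r k) + x (k, Suc k) * cofactor (Dm (Suc k) x) k k"
    by (simp add: Dm_def)
  finally show ?thesis unfolding cof_kk .
qed

context
  fixes N :: "real measure" and MR MT :: nat
  assumes sfN: "sigma_finite_measure N" and spN: "space N = UNIV" and setsN: "sets N = sets borel"
    and noatom: "\<And>c. emeasure N {c} = 0"
begin

abbreviation "PP \<equiv> PiM ({..<MR} \<times> {..<MT}) (\<lambda>_. N)"

lemma comp_meas: "p \<in> {..<MR} \<times> {..<MT} \<Longrightarrow> (\<lambda>x. x p) \<in> borel_measurable PP"
  using measurable_component_singleton[of p "{..<MR} \<times> {..<MT}" "\<lambda>_. N"] setsN
  by (simp add: measurable_def)

lemma AE_step: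
  assumes k: "Suc k < MR" "Suc k < MT"
  shows "AE x in PP. det (Dm k x) \<noteq> 0 \<longrightarrow> det (Dm (Suc k) x) \<noteq> 0"
proof -
  define a where "a = (k, Suc k)"
  define h where "h x = - (\<Sum>r<k. x (k, r+1) * cofactor (Dm (Suc k) x) r k) / det (Dm k x)" for x :: "nat \<times> nat \<Rightarrow> real"
  have aI: "a \<in> {..<MR} \<times> {..<MT}" using k by (simp add: a_def)
  have mD: "(\<lambda>x. det (Dm k x)) \<in> borel_measurable PP"
    unfolding Dm_def by (rule measurable_det) (rule comp_meas, use k in auto)
  have mC: "(\<lambda>x. cofactor (Dm (Suc k) x) r k) \<in> borel_measurable PP" if r: "r < k" for r
  proof -
    have "(\<lambda>x. det (mat k k (\<lambda>(i,j). x (j, (if i < r then i else Suc i) + 1)))) \<in> borel_measurable PP"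
      by (rule measurable_det) (rule comp_meas, use k in auto)
    then show ?thesis unfolding cofactor_def using r by (simp add: mat_delete_Dm)
  qed
  have mX: "(\<lambda>x. x (k, r+1)) \<in> borel_measurable PP" if r: "r < k" for r
    by (rule comp_meas) (use k r in auto)
  have mh: "h \<in> borel_measurable PP"
  proof -
    have "(\<lambda>x. \<Sum>r<k. x (k, r+1) * cofactor (Dm (Suc k) x) r k) \<in> borel_measurable PP"
      by (rule borel_measurable_sum) (use mX mC in auto)
    then show ?thesis unfolding h_def using mD by measurable
  qed
  have hinv: "h (x(a := y)) = h x" for x y
  proof -
    have d: "Dm k (x(a := y)) = Dm k x" by (rule eq_matI) (auto simp: Dm_def a_def)
    have c: "cofactor (Dm (Suc k) (x(a := y))) r k = cofactor (Dm (Suc k) x) r k" if "r < k" for r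
      unfolding cofactor_def using that by (simp add: mat_delete_Dm a_def) (intro arg_cong[where f = det] eq_matI, auto)
    have s: "(\<Sum>r<k. (x(a := y)) (k, r+1) * cofactor (Dm (Suc k) (x(a := y))) r k) = (\<Sum>r<k. x (k, r+1) * cofactor (Dm (Suc k) x) r k)"
      by (intro sum.cong refl) (auto simp: c[unfolded a_def] a_def)
    show ?thesis unfolding h_def d s ..
  qed
  have null: "{x \<in> space PP. x a = h x} \<in> null_sets PP"
    by (rule null_graph[OF _ aI sfN spN setsN noatom mh hinv]) simp
  show ?thesis
  proof (rule AE_I'[OF null], safe)
    fix x assume x: "x \<in> space PP" and d0: "det (Dm k x) \<noteq> 0" and d1: "det (Dm (Suc k) x) = 0"
    have "0 = (\<Sum>r<k. x (k, r+1) * cofactor (Dm (Suc k) x) r k) + x a * det (Dm k x)"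
      using d1 laplace_Dm[of k x] by (simp add: a_def)
    then have "x a = h x" unfolding h_def using d0 by (simp add: field_simps)
    then show "x a = h x" .
  qed
qed

lemma AE_all_dets:
  assumes MRT: "MR \<le> MT"
  shows "AE x in PP. \<forall>k\<in>{1..MR-1}. det (Dm k x) \<noteq> 0"
proof -
  have "k \<le> MR - 1 \<Longrightarrow> MR \<le> MT \<Longrightarrow> AE x in PP. det (Dm k x) \<noteq> 0" for k
  proof (induction k)
    case 0 then show ?case by (simp add: det_Dm0)
  next
    case (Suc k)
    then have "AE x in PP. det (Dm k x) \<noteq> 0" by simp
    moreover have "AE x in PP. det (Dm k x) \<noteq> 0 \<longrightarrow> det (Dm (Suc k) x) \<noteq> 0"
      by (rule AE_step) (use Suc.prems in auto)
    ultimately show ?case by eventually_elim auto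
  qed
  then have "\<forall>k\<in>{1..MR-1}. AE x in PP. det (Dm k x) \<noteq> 0" using MRT by auto
  then show ?thesis by (rule eventually_ball_finite[rotated]) simp
qed

end


theorem lemma5:
  fixes MR MT :: nat and \<sigma> :: real
  assumes "2 \<le> MR" and "MR \<le> MT" and "\<sigma> > 0"
  shows "AE Phi in PiM ({..<MR} \<times> {..<MT}) (\<lambda>_. density lborel (normal_density 0 \<sigma>)).
           \<forall>i\<in>{2..MR}. \<exists>\<eta>\<in>{0..1}.
             has_eigenvalues (Re_mat (gs_A (S_mat MR MT Phi) i))
               (replicate_mset (MT - i) 1 + replicate_mset (i - 2) 0 + {#\<eta>, 1 - \<eta>#})"
proof -
  note nf = normal_facts[OF assms(3)]
  have AE: "AE Phi in PiM ({..<MR} \<times> {..<MT}) (\<lambda>_. density lborel (normal_density 0 \<sigma>)).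
      \<forall>k\<in>{1..MR-1}. det (Dm k Phi) \<noteq> 0"
    by (rule AE_all_dets[OF nf assms(2)])
  then show ?thesis
  proof (rule eventually_mono)
    fix Phi assume h: "\<forall>k\<in>{1..MR-1}. det (Dm k Phi) \<noteq> 0"
    show "\<forall>i\<in>{2..MR}. \<exists>\<eta>\<in>{0..1}.
             has_eigenvalues (Re_mat (gs_A (S_mat MR MT Phi) i))
               (replicate_mset (MT - i) 1 + replicate_mset (i - 2) 0 + {#\<eta>, 1 - \<eta>#})"
    proof
      fix i assume i: "i \<in> {2..MR}"
      then have "i - 1 \<in> {1..MR-1}" by auto
      then have "det (mat (i-1) (i-1) (\<lambda>(r,c). Phi (c, r+1))) \<noteq> 0" using h by (auto simp: Dm_def)
      then show "\<exists>\<eta>\<in>{0..1}.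
             has_eigenvalues (Re_mat (gs_A (S_mat MR MT Phi) i))
               (replicate_mset (MT - i) 1 + replicate_mset (i - 2) 0 + {#\<eta>, 1 - \<eta>#})"
        using alg_main[of i MR MT Phi] i assms(2) by auto
    qed
  qed
qed


end
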